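(* Consider the Maxwell--Bloch system \[ \dot A=B,\quad \dot B=-\Omega^2A-\sigma B+cj(t),\quad i\hbar\dot C_1=\hbar\omega_1C_1+ia(t)C_2,\quad i\hbar\dot C_2=\hbar\omega_2C_2-ia(t)C_1,\qquad t>0, \] with $j(t)=2q\,\mathrm{Im}[\overline{C_1(t)}C_2(t)]$, $a(t)=\frac qc[A(t)+A_p(t)]$, where $A_p\in C[0,\infty)$ is real-valued. Then there exist a quadratic function $V(A,B)$ on $\mathbb R^2$ and constants $a_1,a_2>0$ such that \[ a_1[A^2+B^2]\le V(A,B)\le a_2[A^2+B^2]\quad\text{for all }(A,B)\in\mathbb R^2, \] and constants $\gamma,D>0$ such that for every solution $(A(t),B(t),C_1(t),C_2(t))$ of the system with $|C_1(t)|^2+|C_2(t)|^2=1$, \[ \frac{d}{dt}V(A(t),B(t))\le-\gamma V(A(t),B(t))+D,\qquad t>0. \]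
   Context: Parameters: $\Omega>0$ (resonance frequency), $\sigma>0$ (dissipation), $c>0$, $\hbar>0$, real $\omega_2>\omega_1$, $p>0$, $\omega=\omega_2-\omega_1$, $q=\omega p$. Unknowns: $A(t),B(t)\in\mathbb R$, $C_1(t),C_2(t)\in\mathbb C$. The function $A_p$ (the pumping) is given. *)

theory Defs
  imports "HOL-Analysis.Analysis"
begin

definition quadratic_fun2 :: "(real \<Rightarrow> real \<Rightarrow> real) \<Rightarrow> bool" where
  "quadratic_fun2 V \<longleftrightarrow> (\<exists>k1 k2 k3 k4 k5 k6. \<forall>x y.
     V x y = k1 * x\<^sup>2 + k2 * x * y + k3 * y\<^sup>2 + k4 * x + k5 * y + k6)"

end

theory Submission
  imports Defs
begin

lemma key_ineq:
  fixes s W x y f F2 :: real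
  assumes "s > 0" "W > 0" "f\<^sup>2 \<le> F2"
  shows "- s * W * x\<^sup>2 - s * y\<^sup>2 + (s * x + 2 * y) * f
         \<le> - (s * W / 2) * x\<^sup>2 - (s / 2) * y\<^sup>2 + (s / (2 * W) + 2 / s) * F2"
proof -
  have h1: "s * x * f \<le> s * W * x\<^sup>2 / 2 + s * f\<^sup>2 / (2 * W)"
  proof -
    have "0 \<le> s / (2 * W) * (W * x - f)\<^sup>2" using assms by simp
    also have "\<dots> = s * W * x\<^sup>2 / 2 - s * x * f + s * f\<^sup>2 / (2 * W)"
      using assms by (simp add: power2_eq_square field_simps)
    finally show ?thesis by simp
  qed
  have h2: "2 * y * f \<le> s * y\<^sup>2 / 2 + 2 * f\<^sup>2 / s"
  proof -
    have "0 \<le> 2 / s * (s * y / 2 - f)\<^sup>2" using assms by simp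
    also have "\<dots> = s * y\<^sup>2 / 2 - 2 * y * f + 2 * f\<^sup>2 / s"
      using assms by (simp add: power2_eq_square field_simps)
    finally show ?thesis by simp
  qed
  have h3: "s * f\<^sup>2 / (2 * W) \<le> s * F2 / (2 * W)" using assms
    by (simp add: divide_right_mono)
  have h4: "2 * f\<^sup>2 / s \<le> 2 * F2 / s" using assms
    by (simp add: divide_right_mono)
  show ?thesis using h1 h2 h3 h4 by (simp add: algebra_simps add_divide_distrib)
qed

lemma j_bound:
  fixes a b :: complex and q :: real
  assumes "(cmod a)\<^sup>2 + (cmod b)\<^sup>2 = 1"
  shows "\<bar>2 * q * Im (cnj a * b)\<bar> \<le> \<bar>q\<bar>"
proof -
  have "\<bar>Im (cnj a * b)\<bar> \<le> cmod (cnj a * b)" by (rule abs_Im_le_cmod)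
  also have "\<dots> = cmod a * cmod b" by (simp add: norm_mult)
  finally have i: "\<bar>Im (cnj a * b)\<bar> \<le> cmod a * cmod b" .
  have "0 \<le> (cmod a - cmod b)\<^sup>2" by simp
  hence "2 * (cmod a * cmod b) \<le> 1" using assms by (simp add: power2_eq_square algebra_simps)
  hence "2 * \<bar>Im (cnj a * b)\<bar> \<le> 1" using i by linarith
  hence "\<bar>q\<bar> * (2 * \<bar>Im (cnj a * b)\<bar>) \<le> \<bar>q\<bar>"
    using mult_left_mono[of _ 1 "\<bar>q\<bar>"] by simp
  thus ?thesis by (simp add: abs_mult)
qed

lemma lower_b:
  fixes W s x y :: real
  assumes "W > 0"
  shows "min W (1/2) * (x\<^sup>2 + y\<^sup>2) \<le> (W + s\<^sup>2/2) * x\<^sup>2 + s * x * y + y\<^sup>2"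
proof -
  have "0 \<le> (s * x + y)\<^sup>2 / 2" by simp
  hence a: "W * x\<^sup>2 + y\<^sup>2 / 2 \<le> (W + s\<^sup>2/2) * x\<^sup>2 + s * x * y + y\<^sup>2"
    by (simp add: power2_eq_square algebra_simps)
  have "min W (1/2) * x\<^sup>2 \<le> W * x\<^sup>2" by (simp add: mult_right_mono)
  moreover have "min W (1/2) * y\<^sup>2 \<le> y\<^sup>2 / 2"
    using mult_right_mono[of "min W (1/2)" "1/2" "y\<^sup>2"] by simp
  ultimately show ?thesis using a by (simp add: algebra_simps)
qed

lemma upper_b:
  fixes W s x y :: real
  assumes "W > 0" "s > 0"
  shows "(W + s\<^sup>2/2) * x\<^sup>2 + s * x * y + y\<^sup>2 \<le> (W + s\<^sup>2/2 + s/2 + 1) * (x\<^sup>2 + y\<^sup>2)"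
proof -
  have "0 \<le> s * (x - y)\<^sup>2 / 2" using assms by simp
  hence "s * x * y \<le> s/2 * (x\<^sup>2 + y\<^sup>2)" by (simp add: power2_eq_square algebra_simps)
  moreover have "0 \<le> (s\<^sup>2/2 + W) * y\<^sup>2 + x\<^sup>2" using assms by simp
  moreover have "(W + s\<^sup>2/2 + s/2 + 1) * (x\<^sup>2 + y\<^sup>2) - ((W + s\<^sup>2/2) * x\<^sup>2 + s * x * y + y\<^sup>2)
     = (s\<^sup>2/2 + W) * y\<^sup>2 + x\<^sup>2 + (s/2 * (x\<^sup>2 + y\<^sup>2) - s * x * y)"
    by (simp add: algebra_simps)
  ultimately show ?thesis by linarith
qed

theorem lemma2p1:
  fixes \<Omega> \<sigma> c hbar \<omega>1 \<omega>2 p \<omega> q :: real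
    and Ap :: "real \<Rightarrow> real"
  assumes "\<Omega> > 0" "\<sigma> > 0" "c > 0" "hbar > 0" "\<omega>2 > \<omega>1" "p > 0"
    and "\<omega> = \<omega>2 - \<omega>1" "q = \<omega> * p"
    and "continuous_on {0..} Ap"
  shows "\<exists>V a1 a2 \<gamma> D. quadratic_fun2 V \<and> a1 > 0 \<and> a2 > 0 \<and> \<gamma> > 0 \<and> D > 0 \<and>
    (\<forall>x y. a1 * (x\<^sup>2 + y\<^sup>2) \<le> V x y \<and> V x y \<le> a2 * (x\<^sup>2 + y\<^sup>2)) \<and>
    (\<forall>(A :: real \<Rightarrow> real) (B :: real \<Rightarrow> real) (C1 :: real \<Rightarrow> complex) (C2 :: real \<Rightarrow> complex).
       (let j = (\<lambda>t. 2 * q * Im (cnj (C1 t) * C2 t));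
            a = (\<lambda>t. q / c * (A t + Ap t))
        in (\<forall>t>0. (A has_real_derivative B t) (at t)
               \<and> (B has_real_derivative (- \<Omega>\<^sup>2 * A t - \<sigma> * B t + c * j t)) (at t)
               \<and> (\<exists>d1. (C1 has_vector_derivative d1) (at t) \<and>
                     \<i> * hbar * d1 = hbar * \<omega>1 * C1 t + \<i> * a t * C2 t)
               \<and> (\<exists>d2. (C2 has_vector_derivative d2) (at t) \<and>
                     \<i> * hbar * d2 = hbar * \<omega>2 * C2 t - \<i> * a t * C1 t)
               \<and> (cmod (C1 t))\<^sup>2 + (cmod (C2 t))\<^sup>2 = 1))
       \<longrightarrow> (\<forall>t>0. deriv (\<lambda>s. V (A s) (B s)) t \<le> - \<gamma> * V (A t) (B t) + D))"
proof -
  define W where "W = \<Omega>\<^sup>2"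
  have W0: "W > 0" using assms(1) by (simp add: W_def)
  define k1 where "k1 = W + \<sigma>\<^sup>2/2"
  define V where "V = (\<lambda>x y::real. k1 * x\<^sup>2 + \<sigma> * x * y + y\<^sup>2)"
  define a1 where "a1 = min W (1/2)"
  define a2 where "a2 = W + \<sigma>\<^sup>2/2 + \<sigma>/2 + 1"
  define m where "m = min W 1"
  define \<gamma> where "\<gamma> = \<sigma> * m / (2 * a2)"
  define F2 where "F2 = (c * q)\<^sup>2"
  define D where "D = (\<sigma> / (2 * W) + 2 / \<sigma>) * F2 + 1"
  have a1p: "a1 > 0" using W0 by (simp add: a1_def)
  have a2p: "a2 > 0" using W0 assms(2) by (simp add: a2_def add_pos_nonneg)
  have mp: "m > 0" using W0 by (simp add: m_def)
  have gp: "\<gamma> > 0" using a2p mp assms(2) by (simp add: \<gamma>_def)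
  have Dp: "D > 0" using W0 assms(2) by (simp add: D_def F2_def add_nonneg_pos)
  have quad: "quadratic_fun2 V" unfolding quadratic_fun2_def V_def
    by (rule exI[of _ k1], rule exI[of _ \<sigma>], rule exI[of _ 1], rule exI[of _ 0],
        rule exI[of _ 0], rule exI[of _ 0]) simp
  have bnds: "\<forall>x y. a1 * (x\<^sup>2 + y\<^sup>2) \<le> V x y \<and> V x y \<le> a2 * (x\<^sup>2 + y\<^sup>2)"
    using lower_b[OF W0] upper_b[OF W0 assms(2)]
    by (simp add: V_def k1_def a1_def a2_def)
  have main: "deriv (\<lambda>s. V (A s) (B s)) t \<le> - \<gamma> * V (A t) (B t) + D"
    if dA: "(A has_real_derivative B t) (at t)"
      and dB: "(B has_real_derivative (- \<Omega>\<^sup>2 * A t - \<sigma> * B t + c * (2 * q * Im (cnj (C1 t) * C2 t)))) (at t)"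
      and nrm: "(cmod (C1 t))\<^sup>2 + (cmod (C2 t))\<^sup>2 = 1"
    for A B :: "real \<Rightarrow> real" and C1 C2 :: "real \<Rightarrow> complex" and t :: real
  proof -
    define f where "f = c * (2 * q * Im (cnj (C1 t) * C2 t))"
    define B' where "B' = - W * A t - \<sigma> * B t + f"
    have dB': "(B has_real_derivative B') (at t)" using dB by (simp add: B'_def f_def W_def)
    have "((\<lambda>s. V (A s) (B s)) has_real_derivative
        (k1 * (2 * A t * B t) + \<sigma> * (B t * B t + A t * B') + 2 * B t * B')) (at t)"
      unfolding V_def
      by (auto intro!: derivative_eq_intros dA dB' simp: power2_eq_square algebra_simps)
    hence "deriv (\<lambda>s. V (A s) (B s)) t =
        k1 * (2 * A t * B t) + \<sigma> * (B t * B t + A t * B') + 2 * B t * B'"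
      by (rule DERIV_imp_deriv)
    also have "\<dots> = - \<sigma> * W * (A t)\<^sup>2 - \<sigma> * (B t)\<^sup>2 + (\<sigma> * A t + 2 * B t) * f"
      by (simp add: k1_def B'_def power2_eq_square algebra_simps)
    also have "\<dots> \<le> - (\<sigma> * W / 2) * (A t)\<^sup>2 - (\<sigma> / 2) * (B t)\<^sup>2 + (\<sigma> / (2 * W) + 2 / \<sigma>) * F2"
    proof (rule key_ineq[OF assms(2) W0])
      have "\<bar>f\<bar> \<le> c * \<bar>q\<bar>" using j_bound[OF nrm, of q] assms(3)
        by (simp add: f_def abs_mult mult_left_mono)
      hence "\<bar>f\<bar>\<^sup>2 \<le> (c * \<bar>q\<bar>)\<^sup>2" by (rule power_mono) simp
      thus "f\<^sup>2 \<le> F2" by (simp add: F2_def power_mult_distrib)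
    qed
    also have "\<dots> \<le> - \<gamma> * V (A t) (B t) + D"
    proof -
      have "m * ((A t)\<^sup>2 + (B t)\<^sup>2) \<le> W * (A t)\<^sup>2 + (B t)\<^sup>2"
        using mult_right_mono[of m W "(A t)\<^sup>2"] mult_right_mono[of m 1 "(B t)\<^sup>2"]
        by (simp add: m_def algebra_simps)
      hence e1: "\<sigma>/2 * (m * ((A t)\<^sup>2 + (B t)\<^sup>2)) \<le> \<sigma>/2 * (W * (A t)\<^sup>2 + (B t)\<^sup>2)"
        using assms(2) by (simp add: mult_left_mono)
      have "V (A t) (B t) \<le> a2 * ((A t)\<^sup>2 + (B t)\<^sup>2)" using bnds by blast
      hence "\<gamma> * V (A t) (B t) \<le> \<gamma> * (a2 * ((A t)\<^sup>2 + (B t)\<^sup>2))"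
        using gp by (simp add: mult_left_mono)
      also have "\<dots> = \<sigma>/2 * (m * ((A t)\<^sup>2 + (B t)\<^sup>2))"
        using a2p by (simp add: \<gamma>_def field_simps)
      finally have "\<gamma> * V (A t) (B t) \<le> \<sigma>/2 * (W * (A t)\<^sup>2 + (B t)\<^sup>2)" using e1 by linarith
      thus ?thesis by (simp add: D_def algebra_simps)
    qed
    finally show ?thesis .
  qed
  show ?thesis
    apply (rule exI[of _ V], rule exI[of _ a1], rule exI[of _ a2], rule exI[of _ \<gamma>], rule exI[of _ D])
    using quad a1p a2p gp Dp bnds main by (auto simp: Let_def)
qed

end
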